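(* Let $\lambda>0$, $\gamma>0$, $\beta\ge 0$. Let $X$ be the Banach space of bounded analytic functions $h:[0,\lambda]\to\mathbb{R}$ with the supremum norm, $K=\{h\in X: h\ge 0,\ \|h\|_\infty\le 1\}$, and for $h\in K$ let $\Psi_h=1+\beta h$, $$D_h=\gamma\left(1+\gamma\int_0^\lambda\frac{\exp\left(-2\int_0^x\frac{\xi}{\Psi_h(\xi)}d\xi\right)}{\Psi_h(x)}\,dx\right)^{-1},$$ and define the operator $\tau:K\to X$ by $$(\tau h)(\eta)=D_h\left(\frac1\gamma+\int_0^\eta\frac{\exp\left(-2\int_0^x\frac{\xi}{\Psi_h(\xi)}d\xi\right)}{\Psi_h(x)}\,dx\right),\quad 0<\eta<\lambda.$$ Let $y\in K$. Then $y$ is a solution of \begin{align*} &[(1+\beta y(\eta))y'(\eta)]'+2\eta y'(\eta)=0, \quad 0<\eta<\lambda,\\ &y'(0)+\beta y(0)y'(0)-\gamma y(0)=0,\\ &y(\lambda)=1, \end{align*} if and only if $y$ is a fixed point of $\tau$. *)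

theory Defs
  imports "HOL-Analysis.Analysis"
begin

definition real_analytic_on :: "(real \<Rightarrow> real) \<Rightarrow> real set \<Rightarrow> bool" where
  "real_analytic_on f S \<longleftrightarrow>
     (\<forall>x\<in>S. \<exists>r>0. \<exists>a::nat \<Rightarrow> real.
        \<forall>y\<in>S. \<bar>y - x\<bar> < r \<longrightarrow> (\<lambda>n. a n * (y - x) ^ n) sums f y)"

definition spaceX :: "real \<Rightarrow> (real \<Rightarrow> real) set" where
  "spaceX lam = {h. bounded (h ` {0..lam}) \<and> real_analytic_on h {0..lam}}"

definition setK :: "real \<Rightarrow> (real \<Rightarrow> real) set" where
  "setK lam = {h \<in> spaceX lam. (\<forall>x\<in>{0..lam}. 0 \<le> h x) \<and> (\<forall>x\<in>{0..lam}. \<bar>h x\<bar> \<le> 1)}"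

definition Psi :: "real \<Rightarrow> (real \<Rightarrow> real) \<Rightarrow> real \<Rightarrow> real" where
  "Psi \<beta> h x = 1 + \<beta> * h x"

definition weight :: "real \<Rightarrow> (real \<Rightarrow> real) \<Rightarrow> real \<Rightarrow> real" where
  "weight \<beta> h x = exp (- 2 * integral {0..x} (\<lambda>\<xi>. \<xi> / Psi \<beta> h \<xi>)) / Psi \<beta> h x"

definition Dh :: "real \<Rightarrow> real \<Rightarrow> real \<Rightarrow> (real \<Rightarrow> real) \<Rightarrow> real" where
  "Dh lam \<gamma> \<beta> h = \<gamma> / (1 + \<gamma> * integral {0..lam} (weight \<beta> h))"

definition tau :: "real \<Rightarrow> real \<Rightarrow> real \<Rightarrow> (real \<Rightarrow> real) \<Rightarrow> real \<Rightarrow> real" where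
  "tau lam \<gamma> \<beta> h \<eta> = Dh lam \<gamma> \<beta> h * (1 / \<gamma> + integral {0..\<eta>} (weight \<beta> h))"

definition is_fixed_point :: "real \<Rightarrow> real \<Rightarrow> real \<Rightarrow> (real \<Rightarrow> real) \<Rightarrow> bool" where
  "is_fixed_point lam \<gamma> \<beta> y \<longleftrightarrow> (\<forall>\<eta>\<in>{0..lam}. tau lam \<gamma> \<beta> y \<eta> = y \<eta>)"

definition is_solution :: "real \<Rightarrow> real \<Rightarrow> real \<Rightarrow> (real \<Rightarrow> real) \<Rightarrow> bool" where
  "is_solution lam \<gamma> \<beta> y \<longleftrightarrow>
     (\<exists>y'. (\<forall>\<eta>\<in>{0..lam}. (y has_real_derivative y' \<eta>) (at \<eta> within {0..lam}))
        \<and> (\<forall>\<eta>\<in>{0<..<lam}.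
             ((\<lambda>t. (1 + \<beta> * y t) * y' t) has_real_derivative (- 2 * \<eta> * y' \<eta>)) (at \<eta>))
        \<and> y' 0 + \<beta> * y 0 * y' 0 - \<gamma> * y 0 = 0
        \<and> y lam = 1)"

end

theory Submission
  imports Defs
begin

lemma deriv_unique_cl:
  fixes f :: "real \<Rightarrow> real"
  assumes "a < b" "x \<in> {a..b}"
    "(f has_real_derivative d1) (at x within {a..b})"
    "(f has_real_derivative d2) (at x within {a..b})"
  shows "d1 = d2"
proof -
  have "(f has_vector_derivative d1) (at x within cbox a b)"
       "(f has_vector_derivative d2) (at x within cbox a b)"
    using assms(3,4) by (auto simp: has_real_derivative_iff_has_vector_derivative)
  then show ?thesis using vector_derivative_unique_within_closed_interval[of a b x f d1 d2] assms(1,2)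
    by auto
qed

lemma analytic_cont:
  assumes "real_analytic_on f {0..lam}" "lam > 0"
  shows "continuous_on {0..lam} f"
  unfolding continuous_on_eq_continuous_within
proof
  fix x assume x: "x \<in> {0..lam}"
  obtain r a where r: "r > 0" and ser: "\<forall>z\<in>{0..lam}. \<bar>z - x\<bar> < r \<longrightarrow> (\<lambda>n. a n * (z - x) ^ n) sums f z"
    using assms x unfolding real_analytic_on_def by blast
  define P where "P t = (\<Sum>n. a n * t ^ n)" for t
  obtain t0 where t0: "t0 \<noteq> 0" "x + t0 \<in> {0..lam}" "\<bar>t0\<bar> < r"
  proof (cases "x < lam")
    case True show ?thesis by (rule that[of "min r (lam - x) / 2"]) (use x r True in \<open>auto simp: min_def field_simps\<close>)
  next
    case False show ?thesis by (rule that[of "- min r lam / 2"]) (use x r assms(2) False in \<open>auto simp: min_def field_simps\<close>)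
  qed
  have "summable (\<lambda>n. a n * t0 ^ n)" using ser t0 by (force simp: sums_iff)
  hence "isCont P (x - x)" unfolding P_def using isCont_powser[of a t0 0] t0(1) by auto
  moreover have "isCont (\<lambda>z. z - x) x" by (intro continuous_intros)
  ultimately have "isCont (\<lambda>z. P (z - x)) x" using isCont_o2 by fastforce
  hence c: "continuous (at x within {0..lam}) (\<lambda>z. P (z - x))"
    using continuous_at_imp_continuous_at_within by blast
  show "continuous (at x within {0..lam}) f"
  proof (rule continuous_transform_within[OF c r x])
    fix z assume "z \<in> {0..lam}" "dist z x < r"
    then show "P (z - x) = f z" using ser unfolding P_def by (auto simp: dist_real_def sums_iff)
  qed
qed

lemma basics:
  fixes lam \<beta> :: real and y :: "real \<Rightarrow> real"
  assumes lam: "lam > 0" and b: "\<beta> \<ge> 0" and cont: "continuous_on {0..lam} y"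
    and nn: "\<forall>x\<in>{0..lam}. 0 \<le> y x"
  shows psi: "\<forall>x\<in>{0..lam}. Psi \<beta> y x \<ge> 1"
   and Fd: "\<forall>t\<in>{0..lam}. ((\<lambda>x. integral {0..x} (\<lambda>\<xi>. \<xi> / Psi \<beta> y \<xi>)) has_real_derivative
              t / Psi \<beta> y t) (at t within {0..lam})"
   and wdef: "\<forall>x. weight \<beta> y x = exp (-2 * integral {0..x} (\<lambda>\<xi>. \<xi> / Psi \<beta> y \<xi>)) / Psi \<beta> y x"
   and Gd: "\<forall>t\<in>{0..lam}. ((\<lambda>\<eta>. integral {0..\<eta>} (weight \<beta> y)) has_real_derivative weight \<beta> y t)
              (at t within {0..lam})"
proof -
  define g where "g = (\<lambda>\<xi>. \<xi> / Psi \<beta> y \<xi>)"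
  define F where "F = (\<lambda>x. integral {0..x} g)"
  show ps: "\<forall>x\<in>{0..lam}. Psi \<beta> y x \<ge> 1"
    using nn b by (auto simp: Psi_def)
  have gc: "continuous_on {0..lam} g"
    unfolding g_def Psi_def
    by (intro continuous_intros cont) (use ps in \<open>force simp: Psi_def\<close>)
  have Fd': "\<forall>t\<in>{0..lam}. (F has_real_derivative g t) (at t within {0..lam})"
    unfolding F_def using integral_has_real_derivative[OF gc] by blast
  then show "\<forall>t\<in>{0..lam}. ((\<lambda>x. integral {0..x} (\<lambda>\<xi>. \<xi> / Psi \<beta> y \<xi>)) has_real_derivative
              t / Psi \<beta> y t) (at t within {0..lam})" unfolding F_def g_def by simp
  have Fc: "continuous_on {0..lam} F" using Fd' by (intro DERIV_continuous_on) blast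
  have wd: "weight \<beta> y = (\<lambda>x. exp (-2 * F x) / Psi \<beta> y x)"
    by (auto simp: weight_def F_def g_def)
  then show "\<forall>x. weight \<beta> y x = exp (-2 * integral {0..x} (\<lambda>\<xi>. \<xi> / Psi \<beta> y \<xi>)) / Psi \<beta> y x"
    by (simp add: F_def g_def)
  have wc: "continuous_on {0..lam} (weight \<beta> y)"
    unfolding wd
    by (intro continuous_intros Fc) (use ps cont in \<open>auto simp: Psi_def intro!: continuous_intros\<close>)
  show "\<forall>t\<in>{0..lam}. ((\<lambda>\<eta>. integral {0..\<eta>} (weight \<beta> y)) has_real_derivative weight \<beta> y t)
              (at t within {0..lam})"
    using integral_has_real_derivative[OF wc] by blast
qed

theorem theorem3p2:
  fixes lam \<gamma> \<beta> :: real and y :: "real \<Rightarrow> real"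
  assumes "lam > 0" and "\<gamma> > 0" and "\<beta> \<ge> 0"
    and "y \<in> setK lam"
  shows "is_solution lam \<gamma> \<beta> y \<longleftrightarrow> is_fixed_point lam \<gamma> \<beta> y"
proof -
  note lam = assms(1) and gam = assms(2) and b = assms(3)
  have nn: "\<forall>x\<in>{0..lam}. 0 \<le> y x" and an: "real_analytic_on y {0..lam}"
    using assms(4) by (auto simp: setK_def spaceX_def)
  have cont: "continuous_on {0..lam} y" using analytic_cont[OF an lam] .
  note B = basics[OF lam b cont nn]
  define g where "g = (\<lambda>\<xi>. \<xi> / Psi \<beta> y \<xi>)"
  define F where "F = (\<lambda>x. integral {0..x} g)"
  define w where "w = weight \<beta> y"
  define G where "G = (\<lambda>\<eta>. integral {0..\<eta>} w)"
  define I where "I = G lam"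
  have ps: "\<And>x. x \<in> {0..lam} \<Longrightarrow> Psi \<beta> y x \<ge> 1" using B(1) by blast
  have Fd: "\<And>t. t \<in> {0..lam} \<Longrightarrow> (F has_real_derivative g t) (at t within {0..lam})"
    using B(2) unfolding F_def g_def by blast
  have wdef: "\<And>x. w x = exp (-2 * F x) / Psi \<beta> y x"
    using B(3) unfolding w_def F_def g_def by blast
  have Gd: "\<And>t. t \<in> {0..lam} \<Longrightarrow> (G has_real_derivative w t) (at t within {0..lam})"
    using B(4) unfolding G_def w_def by blast
  have F0: "F 0 = 0" and G0: "G 0 = 0" by (auto simp: F_def G_def)
  have w0: "w 0 = 1 / Psi \<beta> y 0" by (simp add: wdef F0)
  have wpos: "\<And>x. x \<in> {0..lam} \<Longrightarrow> w x \<ge> 0"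
    using ps by (force simp: wdef intro!: divide_nonneg_nonneg)
  have Gc: "continuous_on {0..lam} G" using Gd by (intro DERIV_continuous_on) blast
  have Fc: "continuous_on {0..lam} F" using Fd by (intro DERIV_continuous_on) blast
  have wc: "continuous_on {0..lam} w"
  proof -
    have "w = (\<lambda>x. exp (-2 * F x) / Psi \<beta> y x)" using wdef by auto
    moreover have "continuous_on {0..lam} (\<lambda>x. exp (-2 * F x) / Psi \<beta> y x)"
      by (intro continuous_intros Fc) (use ps cont in \<open>force simp: Psi_def intro!: continuous_intros\<close>)+
    ultimately show ?thesis by simp
  qed
  have I0: "I \<ge> 0"
    unfolding I_def G_def
    by (rule integral_nonneg) (use wpos integrable_continuous_interval[OF wc] in auto)
  have tau_eq: "\<And>\<eta>. tau lam \<gamma> \<beta> y \<eta> = \<gamma> / (1 + \<gamma> * I) * (1 / \<gamma> + G \<eta>)"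
    by (simp add: tau_def Dh_def I_def G_def w_def)
  have Fat: "\<And>t. t \<in> {0<..<lam} \<Longrightarrow> (F has_real_derivative g t) (at t)"
  proof -
    fix t assume t: "t \<in> {0<..<lam}"
    have "at t within {0..lam} = at t" using t by (intro at_within_interior) simp
    then show "(F has_real_derivative g t) (at t)" using Fd[of t] t by auto
  qed
  show ?thesis
  proof
    assume "is_solution lam \<gamma> \<beta> y"
    then obtain y' where H1: "\<forall>\<eta>\<in>{0..lam}. (y has_real_derivative y' \<eta>) (at \<eta> within {0..lam})"
      and H2: "\<forall>\<eta>\<in>{0<..<lam}.
             ((\<lambda>t. (1 + \<beta> * y t) * y' t) has_real_derivative (- 2 * \<eta> * y' \<eta>)) (at \<eta>)"
      and H3: "y' 0 + \<beta> * y 0 * y' 0 - \<gamma> * y 0 = 0" and H4: "y lam = 1"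
      unfolding is_solution_def by blast
    have yat: "\<And>t. t \<in> {0<..<lam} \<Longrightarrow> (y has_real_derivative y' t) (at t)"
    proof -
      fix t assume t: "t \<in> {0<..<lam}"
      have "at t within {0..lam} = at t" using t by (intro at_within_interior) simp
      moreover have "(y has_real_derivative y' t) (at t within {0..lam})" using H1 t by auto
      ultimately show "(y has_real_derivative y' t) (at t)" by simp
    qed
    define k where "k = (\<lambda>t. (1 + \<beta> * y t) * y' t * exp (2 * F t))"
    have kd: "(k has_real_derivative 0) (at t within {0<..<lam})" if t: "t \<in> {0<..<lam}" for t
    proof -
      have D: "(k has_real_derivative ((-2 * t * y' t) * exp (2 * F t) + exp (2 * F t) * (2 * g t) * ((1 + \<beta> * y t) * y' t))) (at t)"
        unfolding k_def
        by (rule DERIV_mult[OF H2[rule_format, OF t] DERIV_chain2[OF DERIV_exp DERIV_cmult[OF Fat[OF t]]]])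
      have p: "Psi \<beta> y t \<ge> 1" using ps t by auto
      have z: "(-2 * t * y' t) * exp (2 * F t) + exp (2 * F t) * (2 * g t) * ((1 + \<beta> * y t) * y' t) = 0"
        using p by (simp add: g_def Psi_def field_simps)
      show ?thesis using has_field_derivative_at_within[OF D[unfolded z]] .
    qed
    obtain c where c: "\<forall>t\<in>{0<..<lam}. k t = c"
      using has_field_derivative_zero_constant[of "{0<..<lam}" k] kd by auto
    have y'eq: "y' t = c * w t" if t: "t \<in> {0<..<lam}" for t
    proof -
      have p: "Psi \<beta> y t \<ge> 1" using ps t by auto
      have e: "exp (-2 * F t) * exp (2 * F t) = 1" by (simp add: exp_add[symmetric])
      have "(1 + \<beta> * y t) * y' t * exp (2 * F t) = c" using c t k_def by auto
      then have "y' t * (Psi \<beta> y t * exp (2 * F t)) = c" by (simp add: Psi_def algebra_simps)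
      then have "y' t = c / (Psi \<beta> y t * exp (2 * F t))" using p
        by (simp add: field_simps)
      also have "\<dots> = c * w t" using p e by (simp add: wdef field_simps)
      finally show ?thesis .
    qed
    have vc: "continuous_on {0..lam} (\<lambda>t. y t - c * G t)"
      by (intro continuous_intros cont Gc)
    have yform: "y \<eta> = y 0 + c * G \<eta>" if e: "\<eta> \<in> {0..lam}" for \<eta>
    proof (cases "\<eta> = 0")
      case True then show ?thesis by (simp add: G0)
    next
      case False
      with e have e0: "0 < \<eta>" by auto
      have "(\<lambda>t. y t - c * G t) \<eta> = (\<lambda>t. y t - c * G t) 0"
      proof (rule DERIV_isconst_end[OF e0])
        show "continuous_on {0..\<eta>} (\<lambda>t. y t - c * G t)"
          by (rule continuous_on_subset[OF vc]) (use e in auto)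
        fix x assume x: "0 < x" "x < \<eta>"
        then have xi: "x \<in> {0<..<lam}" using e by auto
        have Gat: "(G has_real_derivative w x) (at x)"
        proof -
          have "at x within {0..lam} = at x" using xi by (intro at_within_interior) simp
          then show ?thesis using Gd[of x] xi by auto
        qed
        have "((\<lambda>t. y t - c * G t) has_real_derivative (y' x - c * w x)) (at x)"
          by (intro DERIV_diff yat[OF xi] DERIV_cmult Gat)
        then show "((\<lambda>t. y t - c * G t) has_real_derivative 0) (at x)" using y'eq[OF xi] by simp
      qed
      then show ?thesis by (simp add: G0)
    qed
    have "((\<lambda>t. y 0 + c * G t) has_real_derivative (0 + c * w 0)) (at 0 within {0..lam})"
      by (intro DERIV_add DERIV_const DERIV_cmult Gd) (use lam in auto)
    then have "((\<lambda>t. y 0 + c * G t) has_real_derivative (c * w 0)) (at 0 within {0..lam})" by simp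
    then have yd0: "(y has_real_derivative (c * w 0)) (at 0 within {0..lam})"
    proof (rule has_field_derivative_transform_within[where d=1])
      show "0 < (1::real)" by simp
      show "0 \<in> {0..lam}" using lam by simp
      fix x assume x: "x \<in> {0..lam}" "dist x 0 < 1"
      show "y 0 + c * G x = y x" by (rule yform[OF x(1), symmetric])
    qed
    have z0: "(0::real) \<in> {0..lam}" using lam by simp
    have y'0: "y' 0 = c * w 0"
      by (rule deriv_unique_cl[OF lam z0 H1[rule_format, OF z0] yd0])
    have p0: "Psi \<beta> y 0 \<ge> 1" using ps lam by auto
    have a1: "Psi \<beta> y 0 * y' 0 = \<gamma> * y 0" using H3 by (simp add: Psi_def algebra_simps)
    have a2: "Psi \<beta> y 0 * y' 0 = c" using y'0 w0 p0 by simp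
    have cval: "c = \<gamma> * y 0" using a1 a2 by simp
    have one: "y 0 * (1 + \<gamma> * I) = 1" using H4 yform[of lam] lam cval by (simp add: I_def algebra_simps)
    have pos: "1 + \<gamma> * I > 0" using I0 gam by (simp add: add_pos_nonneg)
    show "is_fixed_point lam \<gamma> \<beta> y"
      unfolding is_fixed_point_def
    proof
      fix \<eta> assume e: "\<eta> \<in> {0..lam}"
      have y0: "y 0 = 1 / (1 + \<gamma> * I)" using one pos by (simp add: field_simps)
      have "tau lam \<gamma> \<beta> y \<eta> = \<gamma> * y 0 * (1 / \<gamma> + G \<eta>)"
        by (simp add: tau_eq y0)
      also have "\<dots> = y 0 + c * G \<eta>" using gam cval by (simp add: algebra_simps)
      also have "\<dots> = y \<eta>" using yform[OF e] by simp
      finally show "tau lam \<gamma> \<beta> y \<eta> = y \<eta>" .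
    qed
  next
    assume fp: "is_fixed_point lam \<gamma> \<beta> y"
    define Dc where "Dc = \<gamma> / (1 + \<gamma> * I)"
    have pos: "1 + \<gamma> * I > 0" using I0 gam by (simp add: add_pos_nonneg)
    have yeq: "\<And>\<eta>. \<eta> \<in> {0..lam} \<Longrightarrow> y \<eta> = Dc * (1 / \<gamma> + G \<eta>)"
      using fp unfolding is_fixed_point_def Dc_def by (auto simp: tau_eq)
    show "is_solution lam \<gamma> \<beta> y"
      unfolding is_solution_def
    proof (intro exI[of _ "\<lambda>t. Dc * w t"] conjI ballI)
      fix \<eta> assume e: "\<eta> \<in> {0..lam}"
      have "((\<lambda>t. Dc * (1 / \<gamma> + G t)) has_real_derivative Dc * (0 + w \<eta>)) (at \<eta> within {0..lam})"
        by (intro DERIV_cmult DERIV_add DERIV_const Gd e)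
      then have "((\<lambda>t. Dc * (1 / \<gamma> + G t)) has_real_derivative Dc * w \<eta>) (at \<eta> within {0..lam})" by simp
      then show "(y has_real_derivative Dc * w \<eta>) (at \<eta> within {0..lam})"
        by (rule has_field_derivative_transform_within[where d=1]) (use e yeq in auto)
    next
      fix \<eta> assume e: "\<eta> \<in> {0<..<lam}"
      have ei: "\<eta> \<in> {0..lam}" using e by auto
      have "((\<lambda>t. Dc * exp (-2 * F t)) has_real_derivative Dc * (exp (-2 * F \<eta>) * (-2 * g \<eta>))) (at \<eta> within {0..lam})"
        by (intro DERIV_cmult DERIV_chain2[OF DERIV_exp] Fd ei)
      then have D1: "((\<lambda>t. (1 + \<beta> * y t) * (Dc * w t)) has_real_derivative Dc * (exp (-2 * F \<eta>) * (-2 * g \<eta>))) (at \<eta> within {0..lam})"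
      proof (rule has_field_derivative_transform_within[where d=1]) 
        fix x assume x: "x \<in> {0..lam}"
        have "Psi \<beta> y x \<ge> 1" using ps x by auto
        then show "Dc * exp (-2 * F x) = (1 + \<beta> * y x) * (Dc * w x)"
          by (simp add: wdef Psi_def field_simps)
      qed (use ei in auto)
      have at: "at \<eta> within {0..lam} = at \<eta>" using e by (intro at_within_interior) simp
      have eq: "Dc * (exp (-2 * F \<eta>) * (-2 * g \<eta>)) = - 2 * \<eta> * (Dc * w \<eta>)"
        by (simp add: wdef g_def)
      show "((\<lambda>t. (1 + \<beta> * y t) * (Dc * w t)) has_real_derivative - 2 * \<eta> * (Dc * w \<eta>)) (at \<eta>)"
        using D1[unfolded at eq] .
    next
      have p0: "Psi \<beta> y 0 \<ge> 1" using ps lam by auto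
      have y0: "y 0 = Dc / \<gamma>" using yeq[of 0] lam G0 by auto
      show "Dc * w 0 + \<beta> * y 0 * (Dc * w 0) - \<gamma> * y 0 = 0"
      proof -
        have "Dc * w 0 + \<beta> * y 0 * (Dc * w 0) = Dc * (w 0 * Psi \<beta> y 0)"
          by (simp add: Psi_def algebra_simps)
        also have "\<dots> = Dc" using w0 p0 by simp
        finally show ?thesis using y0 gam by simp
      qed
    next
      have q: "\<gamma> * (1 / \<gamma> + I) = 1 + \<gamma> * I" using gam by (simp add: algebra_simps)
      have "y lam = Dc * (1 / \<gamma> + I)" using yeq[of lam] lam by (simp add: I_def)
      also have "\<dots> = (\<gamma> * (1 / \<gamma> + I)) / (1 + \<gamma> * I)" by (simp add: Dc_def)
      also have "\<dots> = 1" using q pos by simp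
      finally show "y lam = 1" .
    qed
  qed
qed

end
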